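(* Let $g \in \mathbb{I}_{\geq 1}$, $c \in \mathbb{I}_{\geq g}$, $b \in \mathbb{I}_{\geq c}$ be integers with $c/g \notin \mathbb{I}$, and let $q := \lceil c/g\rceil$. Let $\mathbb{X}_p \subseteq \mathbb{R}^{n_p}$, $\mathbb{U}_p\subseteq\mathbb{R}^{m_p}$ be closed sets containing the origin, let $f_p:\mathbb{R}^{n_p}\times\mathbb{R}^{m_p}\to\mathbb{R}^{n_p}$ with $f_p(0,0)=0$, let $\mathbb{X}_{f,p}\subseteq\mathbb{X}_p$ be closed and contain the origin, and let $k_p:\mathbb{X}_{f,p}\to\mathbb{U}_p$. Consider the system $x^+ = f(x,u)$ with state $x=(x_p,u_s,\beta)$, input $u=(u_c,\gamma)$, $\gamma\in\{0,1\}$, and $$f(x,u) = \big(f_p(x_p,\gamma u_c+(1-\gamma)u_s),\ \gamma u_c+(1-\gamma)u_s,\ \min\{\beta+g-\gamma c,\, b\}\big).$$ Define $\mathbb{X}_f' := \{0\}\times\{0\}\times\mathbb{I}_{[0,c-g-1]}$, $\mathbb{X}_f'' := \mathbb{X}_{f,p}\times\mathbb{U}_p\times\mathbb{I}_{[c-g,b]}$, $\mathbb{X}_f := \mathbb{X}_f'\cup\mathbb{X}_f''$, the terminal control sequence $\kappa_0(x) := (0,0)$ if $x\in\mathbb{X}_f'$, $\kappa_0(x):=(k_p(x_p),1)$ if $x\in\mathbb{X}_f''$, and $\kappa_j(x):=(0,0)$ for $j\in\mathbb{I}_{[1,q-1]}$; define $f_0(x):=x$ and $f_i(x) := f\big(f_{i-1}(x),\kappa_{(i-1)\bmod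 q}(f_{i-1}(x))\big)$, and let $f_{\beta,i}(x)$ denote the last (bucket) component of $f_i(x)$. For $\sigma>0$ let $V_{f,\beta}(\beta):=\sigma(b^2-\beta^2)$. Then there exists $\alpha:\mathbb{I}_{[0,b]}\to\mathbb{R}$ with $\alpha(b)=0$ and $\alpha(\beta)>0$ for all $\beta\in\mathbb{I}_{[0,b-1]}$ such that for all $x=(x_p,u_s,\beta)\in\mathbb{X}_f$, $$V_{f,\beta}(f_{\beta,q}(x)) - V_{f,\beta}(\beta) \leq -\alpha(\beta).$$
   Context: $\mathbb{I}$ denotes the integers, $\mathbb{I}_{[a,b]} := \mathbb{I}\cap[a,b]$, $\mathbb{I}_{\geq a}:=\mathbb{I}\cap[a,\infty)$. The component $\beta$ models the token level of a token bucket with bucket size $b$, token generation rate $g$ per step and transmission cost $c$; $\gamma=1$ indicates a transmission. *)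

theory Defs
  imports "HOL-Analysis.Analysis"
begin

definition tb_f :: "(real^'n \<Rightarrow> real^'m \<Rightarrow> real^'n) \<Rightarrow> int \<Rightarrow> int \<Rightarrow> int \<Rightarrow>
    ((real^'n) \<times> (real^'m) \<times> int) \<Rightarrow> ((real^'m) \<times> int) \<Rightarrow> ((real^'n) \<times> (real^'m) \<times> int)" where
  "tb_f fp g c b x u =
     (let (xp, us, \<beta>) = x; (uc, \<gamma>) = u;
          v = real_of_int \<gamma> *\<^sub>R uc + (1 - real_of_int \<gamma>) *\<^sub>R us
      in (fp xp v, v, min (\<beta> + g - \<gamma> * c) b))"

definition Xf1 :: "int \<Rightarrow> int \<Rightarrow> ((real^'n) \<times> (real^'m) \<times> int) set" where
  "Xf1 g c = {0} \<times> {0} \<times> {0..c - g - 1}"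

definition Xf2 :: "(real^'n) set \<Rightarrow> (real^'m) set \<Rightarrow> int \<Rightarrow> int \<Rightarrow> int \<Rightarrow>
    ((real^'n) \<times> (real^'m) \<times> int) set" where
  "Xf2 Xfp Up g c b = Xfp \<times> Up \<times> {c - g..b}"

definition Xf :: "(real^'n) set \<Rightarrow> (real^'m) set \<Rightarrow> int \<Rightarrow> int \<Rightarrow> int \<Rightarrow>
    ((real^'n) \<times> (real^'m) \<times> int) set" where
  "Xf Xfp Up g c b = Xf1 g c \<union> Xf2 Xfp Up g c b"

text \<open>Terminal control sequence kappa_j; kappa_0 outside X_f is irrelevant (set to (0,0)).\<close>
definition kappa :: "(real^'n \<Rightarrow> real^'m) \<Rightarrow> (real^'n) set \<Rightarrow> (real^'m) set \<Rightarrow> int \<Rightarrow> int \<Rightarrow> int \<Rightarrow>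
    nat \<Rightarrow> ((real^'n) \<times> (real^'m) \<times> int) \<Rightarrow> ((real^'m) \<times> int)" where
  "kappa kp Xfp Up g c b j x =
     (if j = 0 \<and> x \<in> Xf2 Xfp Up g c b then (kp (fst x), 1) else (0, 0))"

definition tb_q :: "int \<Rightarrow> int \<Rightarrow> nat" where
  "tb_q g c = nat \<lceil>real_of_int c / real_of_int g\<rceil>"

fun tb_fi :: "(real^'n \<Rightarrow> real^'m \<Rightarrow> real^'n) \<Rightarrow> (real^'n \<Rightarrow> real^'m) \<Rightarrow> (real^'n) set \<Rightarrow>
    (real^'m) set \<Rightarrow> int \<Rightarrow> int \<Rightarrow> int \<Rightarrow> nat \<Rightarrow> ((real^'n) \<times> (real^'m) \<times> int) \<Rightarrow> ((real^'n) \<times> (real^'m) \<times> int)" where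
  "tb_fi fp kp Xfp Up g c b 0 x = x"
| "tb_fi fp kp Xfp Up g c b (Suc i) x =
     (let y = tb_fi fp kp Xfp Up g c b i x
      in tb_f fp g c b y (kappa kp Xfp Up g c b (i mod tb_q g c) y))"

definition Vfb :: "real \<Rightarrow> int \<Rightarrow> int \<Rightarrow> real" where
  "Vfb \<sigma> b \<beta> = \<sigma> * (real_of_int b ^ 2 - real_of_int \<beta> ^ 2)"

end

theory Submission
  imports Defs
begin

lemma tb_f_beta: "snd (snd (tb_f fp g c b y (u, \<gamma>))) = min (snd (snd y) + g - \<gamma> * c) b"
  by (cases y) (simp add: tb_f_def Let_def)

lemma step_beta:
  assumes "i < tb_q g c"
  shows "snd (snd (tb_fi fp kp Xfp Up g c b (Suc i) x)) =
     min (snd (snd (tb_fi fp kp Xfp Up g c b i x)) + g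
          - (if i = 0 \<and> x \<in> Xf2 Xfp Up g c b then c else 0)) b"
proof -
  have m: "i mod tb_q g c = i" using assms by simp
  show ?thesis
    by (cases "i = 0") (auto simp: Let_def m kappa_def tb_f_beta)
qed

lemma iter_beta:
  assumes "1 \<le> i" "i \<le> tb_q g c" "g \<ge> 0"
    and "snd (snd x) + g - c0 \<le> b"
    and "c0 = (if x \<in> Xf2 Xfp Up g c b then c else 0)"
  shows "snd (snd (tb_fi fp kp Xfp Up g c b i x)) = min (snd (snd x) + int i * g - c0) b"
  using assms(1,2)
proof (induction i)
  case 0 then show ?case by simp
next
  case (Suc i)
  show ?case
  proof (cases "i = 0")
    case True
    then show ?thesis using step_beta[of 0 g c fp kp Xfp Up b x] Suc.prems assms(4,5)
      by (auto simp: min_def)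
  next
    case False
    then have "snd (snd (tb_fi fp kp Xfp Up g c b i x)) = min (snd (snd x) + int i * g - c0) b"
      using Suc by simp
    moreover have "i < tb_q g c" using Suc.prems by simp
    ultimately show ?thesis using step_beta[of i g c fp kp Xfp Up b x] False assms(3)
      by (auto simp: min_def algebra_simps)
  qed
qed

theorem lemma2:
  fixes g c b :: int and \<sigma> :: real
    and Xp Xfp :: "(real^'n) set" and Up :: "(real^'m) set"
    and fp :: "real^'n \<Rightarrow> real^'m \<Rightarrow> real^'n" and kp :: "real^'n \<Rightarrow> real^'m"
  assumes "g \<ge> 1" and "c \<ge> g" and "b \<ge> c"
    and "real_of_int c / real_of_int g \<notin> \<int>"
    and "closed Xp" and "0 \<in> Xp" and "closed Up" and "0 \<in> Up"
    and "fp 0 0 = 0"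
    and "closed Xfp" and "Xfp \<subseteq> Xp" and "0 \<in> Xfp"
    and "\<forall>xp\<in>Xfp. kp xp \<in> Up"
    and "\<sigma> > 0"
  shows "\<exists>\<alpha> :: int \<Rightarrow> real. \<alpha> b = 0 \<and> (\<forall>\<beta>\<in>{0..b-1}. \<alpha> \<beta> > 0) \<and>
           (\<forall>x \<in> Xf Xfp Up g c b.
              Vfb \<sigma> b (snd (snd (tb_fi fp kp Xfp Up g c b (tb_q g c) x)))
                - Vfb \<sigma> b (snd (snd x)) \<le> - \<alpha> (snd (snd x)))"
proof -
  define q where "q = tb_q g c"
  have gpos: "real_of_int g > 0" using assms(1) by simp
  have cg: "real_of_int c / real_of_int g \<ge> 1" using assms(1,2) by (simp add: field_simps)
  have qge: "real_of_int (int q) \<ge> real_of_int c / real_of_int g"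
    unfolding q_def tb_q_def using cg by (simp add: le_of_int_ceiling)
  have qne: "real_of_int (int q) \<noteq> real_of_int c / real_of_int g"
    using assms(4) by (metis Ints_of_int)
  have "real_of_int (int q) > real_of_int c / real_of_int g" using qge qne by simp
  then have "real_of_int (int q * g) > real_of_int c" using gpos by (simp add: field_simps)
  then have qg: "int q * g > c" by linarith
  have q1: "q \<ge> 1" using qg assms(1,2) by (cases q) auto
  define \<alpha> where "\<alpha> = (\<lambda>\<beta>::int. \<sigma> * (real_of_int (min (\<beta> + 1) b) ^ 2 - real_of_int \<beta> ^ 2))"
  have A: "Vfb \<sigma> b (snd (snd (tb_fi fp kp Xfp Up g c b q x))) - Vfb \<sigma> b (snd (snd x))
             \<le> - \<alpha> (snd (snd x))" if x: "x \<in> Xf Xfp Up g c b" for x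
  proof -
    obtain xp us \<beta> where xe: "x = (xp, us, \<beta>)" by (cases x) auto
    define c0 where "c0 = (if x \<in> Xf2 Xfp Up g c b then c else 0)"
    have rng: "0 \<le> \<beta> \<and> \<beta> \<le> b \<and> \<beta> + g - c0 \<le> b \<and> \<beta> + int q * g - c0 \<ge> \<beta> + 1"
    proof (cases "x \<in> Xf2 Xfp Up g c b")
      case True
      then show ?thesis using xe assms(1,2,3) qg by (auto simp: c0_def Xf2_def)
    next
      case False
      then have "x \<in> Xf1 g c" using x by (simp add: Xf_def)
      then show ?thesis using False xe assms(1,2,3) qg q1
        by (auto simp: c0_def Xf1_def)
    qed
    have B: "snd (snd (tb_fi fp kp Xfp Up g c b q x)) = min (\<beta> + int q * g - c0) b"
      using iter_beta[of q g c x c0 b Xfp Up fp kp] q1 rng xe c0_def assms(1) q_def by simp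
    define \<beta>' where "\<beta>' = min (\<beta> + int q * g - c0) b"
    have le: "min (\<beta> + 1) b \<le> \<beta>'" using rng unfolding \<beta>'_def by (simp add: min_def)
    have "real_of_int (min (\<beta> + 1) b) ^ 2 \<le> real_of_int \<beta>' ^ 2"
      using le rng by (intro power_mono) auto
    then show ?thesis using B xe assms(14) unfolding \<beta>'_def[symmetric]
      by (simp add: Vfb_def \<alpha>_def algebra_simps mult_left_mono)
  qed
  have "\<alpha> b = 0" by (simp add: \<alpha>_def)
  moreover have "\<forall>\<beta>\<in>{0..b-1}. \<alpha> \<beta> > 0"
  proof
    fix \<beta> assume "\<beta> \<in> {0..b-1}"
    then have "min (\<beta>+1) b = \<beta> + 1" "\<beta> \<ge> 0" by auto
    then show "\<alpha> \<beta> > 0" using assms(14)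
      by (simp add: \<alpha>_def power2_eq_square algebra_simps add_pos_nonneg)
  qed
  ultimately show ?thesis using A q_def by blast
qed

end
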